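(* Let $\Phi_s,\Phi_b$ be pleasant UCQs over $\Sigma$ and let $D$ be a structure over $\Sigma$ with $\Phi_s\odot D>\Phi_b\odot D$. Then $\mathtt{cq}(\Phi_s)\odot\text{Þ}(D)>\mathtt{cq}(\Phi_b)\odot\text{Þ}(D)$; in particular $\mathtt{cq}(\Phi_s)\not\le_\forall\mathtt{cq}(\Phi_b)$.
   Context: Structures are finite relational structures; constants are interpreted in the vertex set $\mathcal V(D)$. For a CQ $\phi$ and structure $D$, $\phi\odot D$ is the number of maps $h:var(\phi)\to\mathcal V(D)$ sending every atom of $\phi$ (with constants interpreted) to a fact of $D$; for a UCQ $\Phi=\bigvee_j\phi_j$ (pairwise variable-disjoint disjuncts) $\Phi\odot D:=\sum_j\phi_j\odot D$. $\Psi_s\le_\forall\Psi_b$ means $\Psi_s\odot D\le\Psi_b\odot D$ for all structures $D$. A query is pleasant if each atom contains at least one variable. Fix a relational signature $\Sigma$ (possibly with constants) and $\Sigma^+=\Sigma\cup\{V,R,\mathsf{mars},\mathsf{venus}\}$ with $V,R$ fresh binary relations and $\mathsf{mars},\mathsf{venus}$ fresh constants. Let $\mathtt{Good}$ be the variable-free CQ consisting of $V(\mathsf{venus},\mathsf{venus})$, $R(\mathsf{venus},\mathsf{venus})$ and all atoms $A(t_1,\dots,t_k)$ with $A\in\Sigma$, each $t_i$ either $\mathsf{venus}$ or a constant of $\Sigma$, and $\mathsf{venus}$ occurring among the $t_i$ at least once. $\mathtt{Planet}(x):=R(\mathsf{venus},x)\wedge R(x,\mathsf{venus})$. $x\rhd\phi:=\phi\wedge\mathtt{Planet}(x)\wedge\bigwedge_{y\in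 var(\phi)}V(x,y)$. $\mathtt{RClique}_J(x_1,\dots,x_J):=\bigwedge_{j}\mathtt{Planet}(x_j)\wedge\bigwedge_{j<j'}(R(x_j,x_{j'})\wedge R(x_{j'},x_j))$. For a pleasant UCQ $\Phi=\bigvee_{j=1}^J\phi_j$ over $\Sigma$, $\mathtt{cq}(\Phi):=\mathtt{RClique}_J(x_1,\dots,x_J)\wedge\bigwedge_{j=1}^J(x_j\rhd\phi_j)$ with fresh variables $x_1,\dots,x_J$. The marsification $\text{Þ}(D)$ of a structure $D$ over $\Sigma$ is the structure over $\Sigma^+$ whose elements are those of $D$ together with two new distinct elements interpreting $\mathsf{mars}$ and $\mathsf{venus}$, and whose facts are: all atoms of $\mathtt{Good}\wedge\mathtt{Planet}(\mathsf{mars})$, all facts of $D$, and $V(\mathsf{mars},a)$ for every $a\in\mathcal V(D)$. *)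

theory Defs
  imports Main "HOL-Library.FuncSet"
begin

text \<open>A relational signature is given by a set of relation symbols Rs with an
arity function ar, and a set of constant symbols Cs.\<close>

datatype ('v, 'c) trm = Var 'v | Const 'c

type_synonym ('r, 'v, 'c) atom = "'r \<times> ('v, 'c) trm list"

type_synonym ('r, 'v, 'c) cq = "('r, 'v, 'c) atom set"
type_synonym ('r, 'v, 'c) ucq = "('r, 'v, 'c) cq list"

fun trm_vars :: "('v, 'c) trm \<Rightarrow> 'v set" where
  "trm_vars (Var v) = {v}"
| "trm_vars (Const c) = {}"

definition atom_vars :: "('r, 'v, 'c) atom \<Rightarrow> 'v set" where
  "atom_vars a = (\<Union>t\<in>set (snd a). trm_vars t)"

definition cq_vars :: "('r, 'v, 'c) cq \<Rightarrow> 'v set" where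
  "cq_vars \<phi> = (\<Union>a\<in>\<phi>. atom_vars a)"

record ('r, 'c, 'e) rstruct =
  dom :: "'e set"
  cint :: "'c \<Rightarrow> 'e"
  facts :: "('r \<times> 'e list) set"

definition struct_over :: "'r set \<Rightarrow> ('r \<Rightarrow> nat) \<Rightarrow> 'c set \<Rightarrow> ('r, 'c, 'e) rstruct \<Rightarrow> bool" where
  "struct_over Rs ar Cs D \<longleftrightarrow>
     finite (dom D) \<and> (\<forall>c\<in>Cs. cint D c \<in> dom D) \<and>
     (\<forall>(A, es)\<in>facts D. A \<in> Rs \<and> length es = ar A \<and> set es \<subseteq> dom D)"

definition atom_over :: "'r set \<Rightarrow> ('r \<Rightarrow> nat) \<Rightarrow> 'c set \<Rightarrow> ('r, 'v, 'c) atom \<Rightarrow> bool" where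
  "atom_over Rs ar Cs a \<longleftrightarrow>
     fst a \<in> Rs \<and> length (snd a) = ar (fst a) \<and> (\<forall>c. Const c \<in> set (snd a) \<longrightarrow> c \<in> Cs)"

definition cq_over :: "'r set \<Rightarrow> ('r \<Rightarrow> nat) \<Rightarrow> 'c set \<Rightarrow> ('r, 'v, 'c) cq \<Rightarrow> bool" where
  "cq_over Rs ar Cs \<phi> \<longleftrightarrow> finite \<phi> \<and> (\<forall>a\<in>\<phi>. atom_over Rs ar Cs a)"

definition pleasant_cq :: "('r, 'v, 'c) cq \<Rightarrow> bool" where
  "pleasant_cq \<phi> \<longleftrightarrow> (\<forall>a\<in>\<phi>. atom_vars a \<noteq> {})"

definition ucq_over :: "'r set \<Rightarrow> ('r \<Rightarrow> nat) \<Rightarrow> 'c set \<Rightarrow> ('r, 'v, 'c) ucq \<Rightarrow> bool" where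
  "ucq_over Rs ar Cs \<Phi> \<longleftrightarrow>
     (\<forall>\<phi>\<in>set \<Phi>. cq_over Rs ar Cs \<phi>) \<and>
     (\<forall>i j. i < length \<Phi> \<and> j < length \<Phi> \<and> i \<noteq> j \<longrightarrow> cq_vars (\<Phi> ! i) \<inter> cq_vars (\<Phi> ! j) = {})"

definition pleasant_ucq :: "('r, 'v, 'c) ucq \<Rightarrow> bool" where
  "pleasant_ucq \<Phi> \<longleftrightarrow> (\<forall>\<phi>\<in>set \<Phi>. pleasant_cq \<phi>)"

fun eval_trm :: "('c \<Rightarrow> 'e) \<Rightarrow> ('v \<Rightarrow> 'e) \<Rightarrow> ('v, 'c) trm \<Rightarrow> 'e" where
  "eval_trm ci h (Var v) = h v"
| "eval_trm ci h (Const c) = ci c"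

definition eval_atom :: "('c \<Rightarrow> 'e) \<Rightarrow> ('v \<Rightarrow> 'e) \<Rightarrow> ('r, 'v, 'c) atom \<Rightarrow> 'r \<times> 'e list" where
  "eval_atom ci h a = (fst a, map (eval_trm ci h) (snd a))"

definition hcount :: "('r, 'v, 'c) cq \<Rightarrow> ('r, 'c, 'e, 'z) rstruct_scheme \<Rightarrow> nat" where
  "hcount \<phi> D = card {h \<in> cq_vars \<phi> \<rightarrow>\<^sub>E dom D. \<forall>a\<in>\<phi>. eval_atom (cint D) h a \<in> facts D}"

definition ucount :: "('r, 'v, 'c) ucq \<Rightarrow> ('r, 'c, 'e, 'z) rstruct_scheme \<Rightarrow> nat" where
  "ucount \<Phi> D = (\<Sum>\<phi>\<leftarrow>\<Phi>. hcount \<phi> D)"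

datatype 'r rsym = Rel 'r | SymV | SymR
datatype 'c csym = Cst 'c | Mars | Venus

definition Rs_plus :: "'r set \<Rightarrow> 'r rsym set" where
  "Rs_plus Rs = Rel ` Rs \<union> {SymV, SymR}"

fun ar_plus :: "('r \<Rightarrow> nat) \<Rightarrow> 'r rsym \<Rightarrow> nat" where
  "ar_plus ar (Rel A) = ar A"
| "ar_plus ar SymV = 2"
| "ar_plus ar SymR = 2"

definition Cs_plus :: "'c set \<Rightarrow> 'c csym set" where
  "Cs_plus Cs = Cst ` Cs \<union> {Mars, Venus}"

text \<open>\<Psi>s \<le>\<forall> \<Psi>b over \<Sigma>+, quantifying over all structures (of element type 'e).\<close>
definition le_forall :: "'e itself \<Rightarrow> 'r set \<Rightarrow> ('r \<Rightarrow> nat) \<Rightarrow> 'c set \<Rightarrow>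
    ('r rsym, 'v, 'c csym) cq \<Rightarrow> ('r rsym, 'v, 'c csym) cq \<Rightarrow> bool" where
  "le_forall _ Rs ar Cs \<Psi>s \<Psi>b \<longleftrightarrow>
     (\<forall>D :: ('r rsym, 'c csym, 'e) rstruct.
        struct_over (Rs_plus Rs) (ar_plus ar) (Cs_plus Cs) D \<longrightarrow> hcount \<Psi>s D \<le> hcount \<Psi>b D)"

definition Good :: "'r set \<Rightarrow> ('r \<Rightarrow> nat) \<Rightarrow> 'c set \<Rightarrow> ('r rsym, 'v, 'c csym) cq" where
  "Good Rs ar Cs =
     {(SymV, [Const Venus, Const Venus]), (SymR, [Const Venus, Const Venus])} \<union>
     {(Rel A, ts) | A ts. A \<in> Rs \<and> length ts = ar A \<and>
        set ts \<subseteq> {Const Venus} \<union> (Const \<circ> Cst) ` Cs \<and> Const Venus \<in> set ts}"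

definition Planet :: "('v, 'c csym) trm \<Rightarrow> ('r rsym, 'v, 'c csym) cq" where
  "Planet x = {(SymR, [Const Venus, x]), (SymR, [x, Const Venus])}"

fun lift_trm :: "('v, 'c) trm \<Rightarrow> ('v + nat, 'c csym) trm" where
  "lift_trm (Var v) = Var (Inl v)"
| "lift_trm (Const c) = Const (Cst c)"

definition lift_cq :: "('r, 'v, 'c) cq \<Rightarrow> ('r rsym, 'v + nat, 'c csym) cq" where
  "lift_cq \<phi> = (\<lambda>(A, ts). (Rel A, map lift_trm ts)) ` \<phi>"

definition rhd :: "('v + nat, 'c csym) trm \<Rightarrow> ('r, 'v, 'c) cq \<Rightarrow> ('r rsym, 'v + nat, 'c csym) cq" where
  "rhd x \<phi> = lift_cq \<phi> \<union> Planet x \<union> {(SymV, [x, Var (Inl y)]) | y. y \<in> cq_vars \<phi>}"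

text \<open>The fresh variables x_1, ..., x_J are Var (Inr 0), ..., Var (Inr (J-1)).\<close>
abbreviation xv :: "nat \<Rightarrow> ('v + nat, 'c csym) trm" where
  "xv j \<equiv> Var (Inr j)"

definition RClique :: "nat \<Rightarrow> ('r rsym, 'v + nat, 'c csym) cq" where
  "RClique J = (\<Union>j<J. Planet (xv j)) \<union>
     (\<Union>j<J. \<Union>j'<J. if j < j' then {(SymR, [xv j, xv j']), (SymR, [xv j', xv j])} else {})"

definition cqOf :: "('r, 'v, 'c) ucq \<Rightarrow> ('r rsym, 'v + nat, 'c csym) cq" where
  "cqOf \<Phi> = RClique (length \<Phi>) \<union> (\<Union>j<length \<Phi>. rhd (xv j) (\<Phi> ! j))"

datatype 'e pelem = Old 'e | MarsE | VenusE

fun pcint :: "('c \<Rightarrow> 'e) \<Rightarrow> 'c csym \<Rightarrow> 'e pelem" where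
  "pcint ci (Cst c) = Old (ci c)"
| "pcint ci Mars = MarsE"
| "pcint ci Venus = VenusE"

definition marsify :: "'r set \<Rightarrow> ('r \<Rightarrow> nat) \<Rightarrow> 'c set \<Rightarrow> ('r, 'c, 'e) rstruct
    \<Rightarrow> ('r rsym, 'c csym, 'e pelem) rstruct" where
  "marsify Rs ar Cs D =
     \<lparr> dom = Old ` dom D \<union> {MarsE, VenusE},
       cint = pcint (cint D),
       facts = eval_atom (pcint (cint D)) (\<lambda>_. undefined)
                 ` (Good Rs ar Cs \<union> Planet (Const Mars) :: ('r rsym, unit, 'c csym) cq)
               \<union> {(Rel A, map Old es) | A es. (A, es) \<in> facts D}
               \<union> {(SymV, [MarsE, Old a]) | a. a \<in> dom D} \<rparr>"

end

theory Submission
  imports Defs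
begin

lemma cq_vars_Un: "cq_vars (A \<union> B) = cq_vars A \<union> cq_vars B" by (simp add: cq_vars_def)
lemma cq_vars_UN: "cq_vars (\<Union>i\<in>I. F i) = (\<Union>i\<in>I. cq_vars (F i))" by (auto simp: cq_vars_def)
lemma cq_vars_Planet: "cq_vars (Planet (Var x)) = {x}" by (simp add: cq_vars_def Planet_def atom_vars_def)
lemma trm_vars_lift: "trm_vars (lift_trm t) = Inl ` trm_vars t" by (cases t) auto
lemma atom_vars_lift: "atom_vars ((\<lambda>(A, ts). (Rel A, map lift_trm ts)) a) = Inl ` atom_vars a"
  by (cases a) (auto simp: atom_vars_def trm_vars_lift)
lemma cq_vars_lift: "cq_vars (lift_cq \<phi>) = Inl ` cq_vars \<phi>"
  unfolding cq_vars_def lift_cq_def by (auto simp: atom_vars_lift simp del: split_paired_all)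
lemma cq_vars_RClique: "cq_vars (RClique J) = Inr ` {..<J}"
proof -
  have "cq_vars (\<Union>j<J. \<Union>j'<J. if j < j' then {(SymR, [xv j, xv j']), (SymR, [xv j', xv j])} else {})
        \<subseteq> Inr ` {..<J}"
    by (auto simp: cq_vars_def atom_vars_def split: if_splits)
  then show ?thesis unfolding RClique_def cq_vars_Un
    by (auto simp: cq_vars_UN cq_vars_Planet)
qed
lemma cq_vars_Vs: "cq_vars {(SymV, [xv j, Var (Inl y)]) | y. y \<in> S} \<subseteq> {Inr j} \<union> Inl ` S"
  "Inl ` S \<subseteq> cq_vars {(SymV, [xv j, Var (Inl y)]) | y. y \<in> S}"
  by (auto simp: cq_vars_def atom_vars_def)
lemma cq_vars_rhd: "cq_vars (rhd (xv j) \<phi>) = {Inr j} \<union> Inl ` cq_vars \<phi>"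
  unfolding rhd_def cq_vars_Un cq_vars_lift cq_vars_Planet
  using cq_vars_Vs[where j=j and S="cq_vars \<phi>"] by blast
lemma cq_vars_cqOf: "cq_vars (cqOf \<Phi>) = Inr ` {..<length \<Phi>} \<union> Inl ` (\<Union>j<length \<Phi>. cq_vars (\<Phi>!j))"
  unfolding cqOf_def cq_vars_Un cq_vars_UN cq_vars_RClique cq_vars_rhd by auto

lemma R_facts: "(SymR, [a,b]) \<in> facts (marsify Rs ar Cs D) \<Longrightarrow>
  (a = VenusE \<and> b = VenusE) \<or> (a = VenusE \<and> b = MarsE) \<or> (a = MarsE \<and> b = VenusE)"
  by (auto simp: marsify_def Good_def Planet_def eval_atom_def)
lemma V_facts: "(SymV, [a,b]) \<in> facts (marsify Rs ar Cs D) \<Longrightarrow>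
  (a = VenusE \<and> b = VenusE) \<or> (a = MarsE \<and> b \<in> Old ` dom D)"
  by (auto simp: marsify_def Good_def Planet_def eval_atom_def)
lemma R_VV: "(SymR, [VenusE, VenusE]) \<in> facts (marsify Rs ar Cs D)"
  by (force simp: marsify_def Good_def Planet_def eval_atom_def)
lemma R_VM: "(SymR, [VenusE, MarsE]) \<in> facts (marsify Rs ar Cs D)"
  by (force simp: marsify_def Good_def Planet_def eval_atom_def)
lemma R_MV: "(SymR, [MarsE, VenusE]) \<in> facts (marsify Rs ar Cs D)"
  by (force simp: marsify_def Good_def Planet_def eval_atom_def)
lemma V_VV: "(SymV, [VenusE, VenusE]) \<in> facts (marsify Rs ar Cs D)"
  by (force simp: marsify_def Good_def Planet_def eval_atom_def)
lemma V_MO: "a \<in> dom D \<Longrightarrow> (SymV, [MarsE, Old a]) \<in> facts (marsify Rs ar Cs D)"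
  by (simp add: marsify_def)

lemma inj_Old: "inj Old" by (auto simp: inj_def)

lemma Rel_Old: "(Rel A, map Old es) \<in> facts (marsify Rs ar Cs D) \<longleftrightarrow> (A, es) \<in> facts D"
proof
  assume "(Rel A, map Old es) \<in> facts (marsify Rs ar Cs D)"
  then consider (G) t where "t \<in> Good Rs ar Cs \<union> Planet (Const Mars)"
     "(Rel A, map Old es) = eval_atom (pcint (cint D)) (\<lambda>_::unit. undefined) t"
    | (D) A' es' where "(A', es') \<in> facts D" "(Rel A, map Old es) = (Rel A', map Old es')"
    by (auto simp: marsify_def)
  then show "(A, es) \<in> facts D"
  proof cases
    case G
    then obtain ts where ts: "Const Venus \<in> set ts" "map Old es = map (eval_trm (pcint (cint D)) (\<lambda>_::unit. undefined)) ts"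
      by (auto simp: Good_def Planet_def eval_atom_def)
    then have "VenusE \<in> set (map Old es)" by force
    then show ?thesis by auto
  next
    case D
    then show ?thesis by (simp add: inj_map_eq_map[OF inj_Old])
  qed
qed (auto simp: marsify_def)

fun venusify :: "('v, 'c) trm \<Rightarrow> (unit, 'c csym) trm" where
  "venusify (Var v) = Const Venus"
| "venusify (Const c) = Const (Cst c)"

lemma Rel_Venus:
  assumes "A \<in> Rs" "length ts = ar A" "\<forall>c. Const c \<in> set ts \<longrightarrow> c \<in> Cs"
    "\<exists>t\<in>set ts. trm_vars t \<noteq> {}" "\<forall>t\<in>set ts. \<forall>v\<in>trm_vars t. h (Inl v) = VenusE"
  shows "(Rel A, map (eval_trm (pcint (cint D)) h) (map lift_trm ts)) \<in> facts (marsify Rs ar Cs D)"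
proof -
  have good: "(Rel A, map venusify ts) \<in> Good Rs ar Cs"
  proof -
    have "set (map venusify ts) \<subseteq> {Const Venus} \<union> (Const \<circ> Cst) ` Cs"
    proof
      fix x assume "x \<in> set (map venusify ts)"
      then obtain t where t: "t \<in> set ts" "x = venusify t" by auto
      show "x \<in> {Const Venus} \<union> (Const \<circ> Cst) ` Cs"
      proof (cases t)
        case (Var v) then show ?thesis using t by simp
      next
        case (Const c) then show ?thesis using t assms(3) by auto
      qed
    qed
    moreover have "Const Venus \<in> set (map venusify ts)"
    proof -
      obtain t where t: "t \<in> set ts" "trm_vars t \<noteq> {}" using assms(4) by blast
      from t(2) obtain v where "t = Var v" by (cases t) auto
      with t show ?thesis by force
    qed
    ultimately show ?thesis using assms(1,2) unfolding Good_def by auto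
  qed
  have pt: "eval_trm (pcint (cint D)) h (lift_trm t) = eval_trm (pcint (cint D)) (\<lambda>_::unit. undefined) (venusify t)"
    if "t \<in> set ts" for t
  proof (cases t)
    case (Var v) then show ?thesis using assms(5) that by fastforce
  qed simp
  have eq: "map (eval_trm (pcint (cint D)) h) (map lift_trm ts) =
      map (eval_trm (pcint (cint D)) (\<lambda>_::unit. undefined)) (map venusify ts)"
    using pt by simp
  show ?thesis unfolding eq marsify_def using good
    by (force simp: eval_atom_def)
qed


fun unOld :: "'e pelem \<Rightarrow> 'e" where "unOld (Old e) = e" | "unOld _ = undefined"

definition h0 :: "('r, 'v, 'c) ucq \<Rightarrow> ('v + nat \<Rightarrow> 'e pelem)" where
  "h0 \<Phi> = (\<lambda>x\<in>cq_vars (cqOf \<Phi>). VenusE)"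

definition extj :: "('r, 'v, 'c) ucq \<Rightarrow> nat \<Rightarrow> ('v \<Rightarrow> 'e) \<Rightarrow> ('v + nat \<Rightarrow> 'e pelem)" where
  "extj \<Phi> k g = (\<lambda>x\<in>cq_vars (cqOf \<Phi>). case x of Inr i \<Rightarrow> if i = k then MarsE else VenusE
       | Inl v \<Rightarrow> if v \<in> cq_vars (\<Phi>!k) then Old (g v) else VenusE)"

lemma cqOf_atoms:
  assumes "a \<in> cqOf \<Phi>"
  shows "(\<exists>j<length \<Phi>. a = (SymR, [Const Venus, xv j]) \<or> a = (SymR, [xv j, Const Venus]))
    \<or> (\<exists>j<length \<Phi>. \<exists>j'<length \<Phi>. j \<noteq> j' \<and> a = (SymR, [xv j, xv j']))
    \<or> (\<exists>j<length \<Phi>. \<exists>y\<in>cq_vars (\<Phi>!j). a = (SymV, [xv j, Var (Inl y)]))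
    \<or> (\<exists>j<length \<Phi>. \<exists>A ts. (A, ts) \<in> \<Phi>!j \<and> a = (Rel A, map lift_trm ts))"
  using assms unfolding cqOf_def RClique_def rhd_def lift_cq_def Planet_def
  by (auto split: if_splits; blast)

lemma cqOf_mem:
  "j < length \<Phi> \<Longrightarrow> (SymR, [Const Venus, xv j]) \<in> cqOf \<Phi>"
  "j < length \<Phi> \<Longrightarrow> j' < length \<Phi> \<Longrightarrow> j \<noteq> j' \<Longrightarrow> (SymR, [xv j, xv j']) \<in> cqOf \<Phi>"
  "j < length \<Phi> \<Longrightarrow> y \<in> cq_vars (\<Phi>!j) \<Longrightarrow> (SymV, [xv j, Var (Inl y)]) \<in> cqOf \<Phi>"
  "j < length \<Phi> \<Longrightarrow> (A, ts) \<in> \<Phi>!j \<Longrightarrow> (Rel A, map lift_trm ts) \<in> cqOf \<Phi>"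
proof -
  assume "j < length \<Phi>" "j' < length \<Phi>" "j \<noteq> j'"
  then show "(SymR, [xv j, xv j']) \<in> cqOf \<Phi>"
  proof (cases "j < j'")
    case True
    then have "(SymR, [xv j, xv j']) \<in> (if j < j' then {(SymR, [xv j, xv j']), (SymR, [xv j', xv j])} else {})"
      by simp
    with \<open>j < length \<Phi>\<close> \<open>j' < length \<Phi>\<close> show ?thesis unfolding cqOf_def RClique_def by blast
  next
    case False
    with \<open>j \<noteq> j'\<close> have "j' < j" by simp
    then have "(SymR, [xv j, xv j']) \<in> (if j' < j then {(SymR, [xv j', xv j]), (SymR, [xv j, xv j'])} else {})"
      by simp
    with \<open>j < length \<Phi>\<close> \<open>j' < length \<Phi>\<close> show ?thesis unfolding cqOf_def RClique_def by blast
  qed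
qed (auto simp: cqOf_def RClique_def rhd_def lift_cq_def Planet_def; force)+


lemma extj_Inr: "j < length \<Phi> \<Longrightarrow> extj \<Phi> k g (Inr j) = (if j = k then MarsE else VenusE)"
  by (simp add: extj_def cq_vars_cqOf)
lemma extj_Inl: "j < length \<Phi> \<Longrightarrow> v \<in> cq_vars (\<Phi>!j) \<Longrightarrow>
   extj \<Phi> k g (Inl v) = (if v \<in> cq_vars (\<Phi>!k) then Old (g v) else VenusE)"
  by (auto simp: extj_def cq_vars_cqOf)
lemma h0_Inr: "j < length \<Phi> \<Longrightarrow> h0 \<Phi> (Inr j) = VenusE"
  by (simp add: h0_def cq_vars_cqOf)
lemma h0_Inl: "j < length \<Phi> \<Longrightarrow> v \<in> cq_vars (\<Phi>!j) \<Longrightarrow> h0 \<Phi> (Inl v) = VenusE"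
  by (auto simp: h0_def cq_vars_cqOf)

lemma dom_M: "dom (marsify Rs ar Cs D) = Old ` dom D \<union> {MarsE, VenusE}"
  by (simp add: marsify_def)
lemma cint_M: "cint (marsify Rs ar Cs D) = pcint (cint D)"
  by (simp add: marsify_def)

lemma vars_in: "(A, ts) \<in> \<phi> \<Longrightarrow> t \<in> set ts \<Longrightarrow> v \<in> trm_vars t \<Longrightarrow> v \<in> cq_vars \<phi>"
  unfolding cq_vars_def atom_vars_def by (auto intro!: bexI[of _ "(A,ts)"])

context
  fixes Rs :: "'r set" and ar :: "'r \<Rightarrow> nat" and Cs :: "'c set"
    and \<Phi> :: "('r, 'v, 'c) ucq" and D :: "('r, 'c, 'e) rstruct"
  assumes U: "ucq_over Rs ar Cs \<Phi>" and P: "pleasant_ucq \<Phi>" and SD: "struct_over Rs ar Cs D"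
begin

lemma disj: "i < length \<Phi> \<Longrightarrow> j < length \<Phi> \<Longrightarrow> i \<noteq> j \<Longrightarrow> v \<in> cq_vars (\<Phi>!i) \<Longrightarrow> v \<notin> cq_vars (\<Phi>!j)"
  using U unfolding ucq_over_def by blast

lemma atom_ok:
  assumes "j < length \<Phi>" "(A, ts) \<in> \<Phi>!j"
  shows "A \<in> Rs \<and> length ts = ar A \<and> (\<forall>c. Const c \<in> set ts \<longrightarrow> c \<in> Cs) \<and> (\<exists>t\<in>set ts. trm_vars t \<noteq> {})"
proof -
  have "\<Phi>!j \<in> set \<Phi>" using assms(1) by simp
  then have "cq_over Rs ar Cs (\<Phi>!j)" "pleasant_cq (\<Phi>!j)" using U P
    by (auto simp: ucq_over_def pleasant_ucq_def)
  then show ?thesis using assms(2)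
    by (auto simp: cq_over_def atom_over_def pleasant_cq_def atom_vars_def)
qed

definition "Hs k = {g \<in> cq_vars (\<Phi>!k) \<rightarrow>\<^sub>E dom D. \<forall>a\<in>\<Phi>!k. eval_atom (cint D) g a \<in> facts D}"
definition "S = {h \<in> cq_vars (cqOf \<Phi>) \<rightarrow>\<^sub>E dom (marsify Rs ar Cs D).
    \<forall>a\<in>cqOf \<Phi>. eval_atom (cint (marsify Rs ar Cs D)) h a \<in> facts (marsify Rs ar Cs D)}"

lemma suff:
  assumes h: "h \<in> cq_vars (cqOf \<Phi>) \<rightarrow>\<^sub>E dom (marsify Rs ar Cs D)"
    and i: "\<forall>j<length \<Phi>. h (Inr j) = VenusE \<or> h (Inr j) = MarsE"
    and ii: "\<forall>j<length \<Phi>. \<forall>j'<length \<Phi>. j \<noteq> j' \<longrightarrow> \<not> (h (Inr j) = MarsE \<and> h (Inr j') = MarsE)"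
    and iii: "\<forall>j<length \<Phi>. \<forall>y\<in>cq_vars (\<Phi>!j). (SymV, [h (Inr j), h (Inl y)]) \<in> facts (marsify Rs ar Cs D)"
    and iv: "\<forall>j<length \<Phi>. \<forall>A ts. (A, ts) \<in> \<Phi>!j \<longrightarrow>
        (Rel A, map (eval_trm (pcint (cint D)) h) (map lift_trm ts)) \<in> facts (marsify Rs ar Cs D)"
  shows "h \<in> S"
  unfolding S_def
proof (intro CollectI conjI ballI h)
  fix a assume a: "a \<in> cqOf \<Phi>"
  have RR: "(SymR, [x, y]) \<in> facts (marsify Rs ar Cs D)"
    if "(x = VenusE \<and> y = VenusE) \<or> (x = VenusE \<and> y = MarsE) \<or> (x = MarsE \<and> y = VenusE)" for x y
    using that R_VV R_VM R_MV by blast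
  let ?G = "eval_atom (cint (marsify Rs ar Cs D)) h a \<in> facts (marsify Rs ar Cs D)"
  have c1: ?G if j: "j < length \<Phi>" and "a = (SymR, [Const Venus, xv j])" for j
    using that i RR by (auto simp: eval_atom_def cint_M)
  have c2: ?G if j: "j < length \<Phi>" and "a = (SymR, [xv j, Const Venus])" for j
    using that i RR by (auto simp: eval_atom_def cint_M)
  have c3: ?G if j: "j < length \<Phi>" "j' < length \<Phi>" "j \<noteq> j'" and "a = (SymR, [xv j, xv j'])" for j j'
    using that i[rule_format, of j] i[rule_format, of j'] ii RR
    by (auto simp: eval_atom_def cint_M)
  have c4: ?G if "j < length \<Phi>" "y \<in> cq_vars (\<Phi>!j)" "a = (SymV, [xv j, Var (Inl y)])" for j y
    using that iii by (auto simp: eval_atom_def cint_M)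
  have c5: ?G if "j < length \<Phi>" "(A, ts) \<in> \<Phi>!j" "a = (Rel A, map lift_trm ts)" for j A ts
    using that iv by (auto simp: eval_atom_def cint_M)
  show ?G using cqOf_atoms[OF a] c1 c2 c3 c4 c5 by blast
qed


lemma h0_Pi: "h0 \<Phi> \<in> cq_vars (cqOf \<Phi>) \<rightarrow>\<^sub>E dom (marsify Rs ar Cs D)"
  by (auto simp: h0_def dom_M)

lemma extj_Pi: assumes "g \<in> cq_vars (\<Phi>!k) \<rightarrow>\<^sub>E dom D"
  shows "extj \<Phi> k g \<in> cq_vars (cqOf \<Phi>) \<rightarrow>\<^sub>E dom (marsify Rs ar Cs D)"
  using assms unfolding extj_def dom_M by (auto split: sum.splits simp: PiE_iff)

lemma h0_S: "h0 \<Phi> \<in> S"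
proof (rule suff[OF h0_Pi])
  show "\<forall>j<length \<Phi>. \<forall>y\<in>cq_vars (\<Phi>!j). (SymV, [h0 \<Phi> (Inr j), h0 \<Phi> (Inl y)]) \<in> facts (marsify Rs ar Cs D)"
    by (simp add: h0_Inr h0_Inl V_VV)
  show "\<forall>j<length \<Phi>. \<forall>A ts. (A, ts) \<in> \<Phi>!j \<longrightarrow>
        (Rel A, map (eval_trm (pcint (cint D)) (h0 \<Phi>)) (map lift_trm ts)) \<in> facts (marsify Rs ar Cs D)"
  proof (intro allI impI)
    fix j A ts assume j: "j < length \<Phi>" and a: "(A, ts) \<in> \<Phi>!j"
    show "(Rel A, map (eval_trm (pcint (cint D)) (h0 \<Phi>)) (map lift_trm ts)) \<in> facts (marsify Rs ar Cs D)"
      using atom_ok[OF j a] h0_Inl[OF j] vars_in[OF a] by (intro Rel_Venus) auto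
  qed
qed (auto simp: h0_Inr)

lemma ext_S:
  assumes k: "k < length \<Phi>" and g: "g \<in> Hs k"
  shows "extj \<Phi> k g \<in> S"
proof -
  have gPi: "g \<in> cq_vars (\<Phi>!k) \<rightarrow>\<^sub>E dom D" and gh: "\<forall>a\<in>\<Phi>!k. eval_atom (cint D) g a \<in> facts D"
    using g by (auto simp: Hs_def)
  show ?thesis
  proof (rule suff[OF extj_Pi[OF gPi]])
    show "\<forall>j<length \<Phi>. \<forall>y\<in>cq_vars (\<Phi>!j). (SymV, [extj \<Phi> k g (Inr j), extj \<Phi> k g (Inl y)]) \<in> facts (marsify Rs ar Cs D)"
    proof (intro allI impI ballI)
      fix j y assume j: "j < length \<Phi>" and y: "y \<in> cq_vars (\<Phi>!j)"
      show "(SymV, [extj \<Phi> k g (Inr j), extj \<Phi> k g (Inl y)]) \<in> facts (marsify Rs ar Cs D)"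
      proof (cases "j = k")
        case True
        then have "g y \<in> dom D" using gPi y by auto
        then show ?thesis using True j y by (simp add: extj_Inr extj_Inl V_MO)
      next
        case False
        then have "y \<notin> cq_vars (\<Phi>!k)" using disj[OF j k False y] by simp
        then show ?thesis using False j y by (simp add: extj_Inr extj_Inl V_VV)
      qed
    qed
    show "\<forall>j<length \<Phi>. \<forall>A ts. (A, ts) \<in> \<Phi>!j \<longrightarrow>
        (Rel A, map (eval_trm (pcint (cint D)) (extj \<Phi> k g)) (map lift_trm ts)) \<in> facts (marsify Rs ar Cs D)"
    proof (intro allI impI)
      fix j A ts assume j: "j < length \<Phi>" and a: "(A, ts) \<in> \<Phi>!j"
      show "(Rel A, map (eval_trm (pcint (cint D)) (extj \<Phi> k g)) (map lift_trm ts)) \<in> facts (marsify Rs ar Cs D)"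
      proof (cases "j = k")
        case True
        have pt: "eval_trm (pcint (cint D)) (extj \<Phi> k g) (lift_trm t) = Old (eval_trm (cint D) g t)"
          if "t \<in> set ts" for t
        proof (cases t)
          case (Var v)
          then have "v \<in> cq_vars (\<Phi>!k)" using vars_in[OF a that] True by simp
          then show ?thesis using Var k by (simp add: extj_Inl)
        qed simp
        have "map (eval_trm (pcint (cint D)) (extj \<Phi> k g)) (map lift_trm ts) = map Old (map (eval_trm (cint D) g) ts)"
          using pt by simp
        moreover have "(A, map (eval_trm (cint D) g) ts) \<in> facts D"
          using gh a True by (auto simp: eval_atom_def)
        ultimately show ?thesis by (metis Rel_Old)
      next
        case False
        have "\<forall>t\<in>set ts. \<forall>v\<in>trm_vars t. extj \<Phi> k g (Inl v) = VenusE"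
        proof (intro ballI)
          fix t v assume "t \<in> set ts" "v \<in> trm_vars t"
          then have vj: "v \<in> cq_vars (\<Phi>!j)" by (rule vars_in[OF a])
          have e: "extj \<Phi> k g (Inl v) = (if v \<in> cq_vars (\<Phi>!k) then Old (g v) else VenusE)"
            by (rule extj_Inl[OF j vj])
          show "extj \<Phi> k g (Inl v) = VenusE" using e disj[OF j k False vj] by simp
        qed
        then show ?thesis using atom_ok[OF j a] by (intro Rel_Venus) auto
      qed
    qed
  qed (auto simp: extj_Inr)
qed

lemma S_sub:
  assumes hS: "h \<in> S"
  shows "h = h0 \<Phi> \<or> (\<exists>k<length \<Phi>. \<exists>g\<in>Hs k. h = extj \<Phi> k g)"
proof -
  have hPi: "h \<in> cq_vars (cqOf \<Phi>) \<rightarrow>\<^sub>E dom (marsify Rs ar Cs D)"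
    and hA: "\<forall>a\<in>cqOf \<Phi>. eval_atom (pcint (cint D)) h a \<in> facts (marsify Rs ar Cs D)"
    using hS by (auto simp: S_def cint_M)
  have planet: "h (Inr j) = VenusE \<or> h (Inr j) = MarsE" if "j < length \<Phi>" for j
    using hA cqOf_mem(1)[OF that] R_facts[of VenusE "h (Inr j)" Rs ar Cs D]
    by (auto simp: eval_atom_def)
  have cl: "\<not> (h (Inr j) = MarsE \<and> h (Inr j') = MarsE)"
    if "j < length \<Phi>" "j' < length \<Phi>" "j \<noteq> j'" for j j'
    using hA cqOf_mem(2)[OF that] R_facts[of "h (Inr j)" "h (Inr j')" Rs ar Cs D]
    by (auto simp: eval_atom_def)
  have Va: "(SymV, [h (Inr j), h (Inl y)]) \<in> facts (marsify Rs ar Cs D)"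
    if "j < length \<Phi>" "y \<in> cq_vars (\<Phi>!j)" for j y
    using hA cqOf_mem(3)[OF that] by (auto simp: eval_atom_def)
  have La: "(Rel A, map (eval_trm (pcint (cint D)) h) (map lift_trm ts)) \<in> facts (marsify Rs ar Cs D)"
    if "j < length \<Phi>" "(A, ts) \<in> \<Phi>!j" for j A ts
    using hA cqOf_mem(4)[OF that] by (auto simp: eval_atom_def)
  show ?thesis
  proof (cases "\<exists>k<length \<Phi>. h (Inr k) = MarsE")
    case False
    have "h = h0 \<Phi>"
    proof (rule PiE_ext[OF hPi h0_Pi])
      fix x assume "x \<in> cq_vars (cqOf \<Phi>)"
      then consider (r) j where "j < length \<Phi>" "x = Inr j"
        | (l) j v where "j < length \<Phi>" "v \<in> cq_vars (\<Phi>!j)" "x = Inl v"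
        by (auto simp: cq_vars_cqOf)
      then show "h x = h0 \<Phi> x"
      proof cases
        case r then show ?thesis using planet[of j] False by (auto simp: h0_Inr)
      next
        case l
        have "h (Inr j) = VenusE" using planet[of j] False l by auto
        then show ?thesis using V_facts[OF Va[OF l(1,2)]] l by (auto simp: h0_Inl)
      qed
    qed
    then show ?thesis by simp
  next
    case True
    then obtain k where k: "k < length \<Phi>" "h (Inr k) = MarsE" by blast
    have others: "h (Inr j) = VenusE" if "j < length \<Phi>" "j \<noteq> k" for j
      using planet[OF that(1)] cl[OF that(1) k(1) that(2)] k(2) by auto
    define g where "g = restrict (\<lambda>v. unOld (h (Inl v))) (cq_vars (\<Phi>!k))"
    have hv: "h (Inl v) = Old (g v) \<and> g v \<in> dom D" if "v \<in> cq_vars (\<Phi>!k)" for v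
    proof -
      have "h (Inl v) \<in> Old ` dom D" using V_facts[OF Va[OF k(1) that]] k(2) by auto
      then show ?thesis using that by (auto simp: g_def)
    qed
    have gPi: "g \<in> cq_vars (\<Phi>!k) \<rightarrow>\<^sub>E dom D" using hv by (auto simp: g_def)
    have gh: "eval_atom (cint D) g a \<in> facts D" if a: "a \<in> \<Phi>!k" for a
    proof -
      obtain A ts where a': "a = (A, ts)" by (cases a)
      have pt: "eval_trm (pcint (cint D)) h (lift_trm t) = Old (eval_trm (cint D) g t)"
        if "t \<in> set ts" for t
      proof (cases t)
        case (Var v)
        then have "v \<in> cq_vars (\<Phi>!k)" using vars_in[OF a[unfolded a'] that] by simp
        then show ?thesis using Var hv by simp
      qed simp
      have "map (eval_trm (pcint (cint D)) h) (map lift_trm ts) = map Old (map (eval_trm (cint D) g) ts)"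
        using pt by simp
      then have "(Rel A, map Old (map (eval_trm (cint D) g) ts)) \<in> facts (marsify Rs ar Cs D)"
        using La[OF k(1) a[unfolded a']] by metis
      then have "(A, map (eval_trm (cint D) g) ts) \<in> facts D" by (simp only: Rel_Old)
      then show ?thesis using a' by (simp add: eval_atom_def)
    qed
    have gH: "g \<in> Hs k" using gPi gh by (auto simp: Hs_def)
    have "h = extj \<Phi> k g"
    proof (rule PiE_ext[OF hPi extj_Pi[OF gPi]])
      fix x assume "x \<in> cq_vars (cqOf \<Phi>)"
      then consider (r) j where "j < length \<Phi>" "x = Inr j"
        | (l) j v where "j < length \<Phi>" "v \<in> cq_vars (\<Phi>!j)" "x = Inl v"
        by (auto simp: cq_vars_cqOf)
      then show "h x = extj \<Phi> k g x"
      proof cases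
        case r then show ?thesis using others[of j] k by (auto simp: extj_Inr)
      next
        case l
        show ?thesis
        proof (cases "v \<in> cq_vars (\<Phi>!k)")
          case True then show ?thesis using l hv by (simp add: extj_Inl)
        next
          case False
          then have "j \<noteq> k" using l by auto
          then have "h (Inr j) = VenusE" using others l by auto
          then show ?thesis using V_facts[OF Va[OF l(1,2)]] l False by (auto simp: extj_Inl)
        qed
      qed
    qed
    then show ?thesis using k gH by blast
  qed
qed

lemma S_eq: "S = insert (h0 \<Phi>) (\<Union>k<length \<Phi>. extj \<Phi> k ` Hs k)"
proof
  show "S \<subseteq> insert (h0 \<Phi>) (\<Union>k<length \<Phi>. extj \<Phi> k ` Hs k)"
  proof
    fix h assume "h \<in> S"
    from S_sub[OF this] show "h \<in> insert (h0 \<Phi>) (\<Union>k<length \<Phi>. extj \<Phi> k ` Hs k)" by blast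
  qed
  show "insert (h0 \<Phi>) (\<Union>k<length \<Phi>. extj \<Phi> k ` Hs k) \<subseteq> S"
    using h0_S ext_S by blast
qed

lemma finite_cq_vars: "j < length \<Phi> \<Longrightarrow> finite (cq_vars (\<Phi>!j))"
proof -
  assume j: "j < length \<Phi>"
  then have "\<Phi>!j \<in> set \<Phi>" by simp
  then have "finite (\<Phi>!j)" using U by (auto simp: ucq_over_def cq_over_def)
  moreover have "finite (trm_vars t)" for t :: "('v,'c) trm" by (cases t) auto
  ultimately show ?thesis by (auto simp: cq_vars_def atom_vars_def)
qed

lemma finite_Hs: "k < length \<Phi> \<Longrightarrow> finite (Hs k)"
proof -
  assume k: "k < length \<Phi>"
  have "finite (cq_vars (\<Phi>!k) \<rightarrow>\<^sub>E dom D)"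
    using finite_cq_vars[OF k] SD by (intro finite_PiE) (auto simp: struct_over_def)
  then show ?thesis unfolding Hs_def by (rule rev_finite_subset) auto
qed

lemma inj_extj: "k < length \<Phi> \<Longrightarrow> inj_on (extj \<Phi> k) (Hs k)"
proof (rule inj_onI)
  fix g g' assume k: "k < length \<Phi>" and g: "g \<in> Hs k" "g' \<in> Hs k" and eq: "extj \<Phi> k g = extj \<Phi> k g'"
  show "g = g'"
  proof (rule PiE_ext)
    show "g \<in> cq_vars (\<Phi>!k) \<rightarrow>\<^sub>E dom D" "g' \<in> cq_vars (\<Phi>!k) \<rightarrow>\<^sub>E dom D" using g by (auto simp: Hs_def)
    fix v assume v: "v \<in> cq_vars (\<Phi>!k)"
    have "extj \<Phi> k g (Inl v) = extj \<Phi> k g' (Inl v)" using eq by simp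
    moreover have "extj \<Phi> k g (Inl v) = Old (g v)" using extj_Inl[OF k v, of k g] v by simp
    moreover have "extj \<Phi> k g' (Inl v) = Old (g' v)" using extj_Inl[OF k v, of k g'] v by simp
    ultimately show "g v = g' v" by simp
  qed
qed

lemma count: "hcount (cqOf \<Phi>) (marsify Rs ar Cs D) = Suc (ucount \<Phi> D)"
proof -
  have "hcount (cqOf \<Phi>) (marsify Rs ar Cs D) = card S" by (simp add: hcount_def S_def)
  also have "\<dots> = Suc (card (\<Union>k<length \<Phi>. extj \<Phi> k ` Hs k))"
  proof -
    have "h0 \<Phi> \<notin> (\<Union>k<length \<Phi>. extj \<Phi> k ` Hs k)"
    proof
      assume "h0 \<Phi> \<in> (\<Union>k<length \<Phi>. extj \<Phi> k ` Hs k)"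
      then obtain k and g :: "'v \<Rightarrow> 'e" where "k < length \<Phi>" "h0 \<Phi> = extj \<Phi> k g" by blast
      then have "h0 \<Phi> (Inr k) = extj \<Phi> k g (Inr k)" by simp
      moreover have "h0 \<Phi> (Inr k) = (VenusE :: 'e pelem)" using h0_Inr[OF \<open>k < length \<Phi>\<close>] .
      moreover have "extj \<Phi> k g (Inr k) = MarsE" using extj_Inr[OF \<open>k < length \<Phi>\<close>, of k g] by simp
      ultimately show False by simp
    qed
    moreover have "finite (\<Union>k<length \<Phi>. extj \<Phi> k ` Hs k)" using finite_Hs by auto
    ultimately show ?thesis unfolding S_eq by (rule card_insert_disjoint[rotated])
  qed
  also have "card (\<Union>k<length \<Phi>. extj \<Phi> k ` Hs k) = (\<Sum>k<length \<Phi>. card (extj \<Phi> k ` Hs k))"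
  proof (rule card_UN_disjoint)
    show "finite {..<length \<Phi>}" by simp
    show "\<forall>i\<in>{..<length \<Phi>}. finite (extj \<Phi> i ` Hs i)" using finite_Hs by auto
    show "\<forall>i\<in>{..<length \<Phi>}. \<forall>j\<in>{..<length \<Phi>}. i \<noteq> j \<longrightarrow> extj \<Phi> i ` Hs i \<inter> extj \<Phi> j ` Hs j = {}"
    proof (intro ballI impI)
      fix i j assume i: "i \<in> {..<length \<Phi>}" and j: "j \<in> {..<length \<Phi>}" and ij: "i \<noteq> j"
      show "extj \<Phi> i ` Hs i \<inter> extj \<Phi> j ` Hs j = {}"
      proof (rule ccontr)
        assume "extj \<Phi> i ` Hs i \<inter> extj \<Phi> j ` Hs j \<noteq> {}"
        then obtain g g' :: "'v \<Rightarrow> 'e" where "extj \<Phi> i g = extj \<Phi> j g'" by blast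
        then have "extj \<Phi> i g (Inr i) = extj \<Phi> j g' (Inr i)" by simp
        moreover have "i < length \<Phi>" using i by simp
        moreover have "extj \<Phi> i g (Inr i) = MarsE" using extj_Inr[OF \<open>i < length \<Phi>\<close>, of i g] by simp
        moreover have "extj \<Phi> j g' (Inr i) = VenusE" using extj_Inr[OF \<open>i < length \<Phi>\<close>, of j g'] ij by simp
        ultimately show False by simp
      qed
    qed
  qed
  also have "\<dots> = (\<Sum>k<length \<Phi>. hcount (\<Phi>!k) D)"
  proof (rule sum.cong[OF refl])
    fix k assume "k \<in> {..<length \<Phi>}"
    then have k: "k < length \<Phi>" by simp
    have "card (extj \<Phi> k ` Hs k) = card (Hs k)" by (rule card_image[OF inj_extj[OF k]])
    also have "\<dots> = hcount (\<Phi>!k) D" by (simp add: Hs_def hcount_def)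
    finally show "card (extj \<Phi> k ` Hs k) = hcount (\<Phi>!k) D" .
  qed
  also have "\<dots> = ucount \<Phi> D"
    by (simp add: ucount_def sum_list_sum_nth atLeast0LessThan)
  finally show ?thesis by simp
qed
end

lemma mars_struct:
  assumes SD: "struct_over Rs ar Cs D"
  shows "struct_over (Rs_plus Rs) (ar_plus ar) (Cs_plus Cs) (marsify Rs ar Cs D)"
proof -
  have fD: "finite (dom D)" and cD: "\<forall>c\<in>Cs. cint D c \<in> dom D"
    and fcD: "\<forall>(A, es)\<in>facts D. A \<in> Rs \<and> length es = ar A \<and> set es \<subseteq> dom D"
    using SD by (auto simp: struct_over_def)
  have good: "A \<in> Rs_plus Rs \<and> length es = ar_plus ar A \<and> set es \<subseteq> dom (marsify Rs ar Cs D)"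
    if AE: "(A, es) \<in> eval_atom (pcint (cint D)) (\<lambda>_::unit. undefined) ` (Good Rs ar Cs \<union> Planet (Const Mars))" for A es
  proof -
    obtain t where t: "t \<in> Good Rs ar Cs \<union> Planet (Const Mars)"
      and e: "(A, es) = eval_atom (pcint (cint D)) (\<lambda>_::unit. undefined) t" using AE by blast
    show ?thesis
    proof (cases "t \<in> Planet (Const Mars)")
      case True then show ?thesis using e by (auto simp: Planet_def eval_atom_def Rs_plus_def dom_M)
    next
      case False
      then have "t \<in> Good Rs ar Cs" using t by blast
      then consider "t = (SymV, [Const Venus, Const Venus])" | "t = (SymR, [Const Venus, Const Venus])"
        | B ts where "t = (Rel B, ts)" "B \<in> Rs" "length ts = ar B"
           "set ts \<subseteq> {Const Venus} \<union> (Const \<circ> Cst) ` Cs"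
        unfolding Good_def by blast
      then show ?thesis
      proof cases
        case 3
        have "set es \<subseteq> dom (marsify Rs ar Cs D)"
        proof
          fix x assume "x \<in> set es"
          then obtain s where s: "s \<in> set ts" "x = eval_trm (pcint (cint D)) (\<lambda>_::unit. undefined) s"
            using e 3 by (auto simp: eval_atom_def)
          then have "s \<in> {Const Venus} \<union> (Const \<circ> Cst) ` Cs" using 3 by blast
          then show "x \<in> dom (marsify Rs ar Cs D)" using s cD by (auto simp: dom_M)
        qed
        then show ?thesis using e 3 by (auto simp: eval_atom_def Rs_plus_def)
      qed (use e in \<open>auto simp: eval_atom_def Rs_plus_def dom_M\<close>)
    qed
  qed
  have 1: "finite (dom (marsify Rs ar Cs D))" using fD by (simp add: dom_M)
  have 2: "\<forall>c\<in>Cs_plus Cs. cint (marsify Rs ar Cs D) c \<in> dom (marsify Rs ar Cs D)"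
    using cD by (auto simp: Cs_plus_def cint_M dom_M)
  have 3: "A \<in> Rs_plus Rs \<and> length es = ar_plus ar A \<and> set es \<subseteq> dom (marsify Rs ar Cs D)"
    if f: "(A, es) \<in> facts (marsify Rs ar Cs D)" for A es
  proof -
    have "(A, es) \<in> eval_atom (pcint (cint D)) (\<lambda>_::unit. undefined) ` (Good Rs ar Cs \<union> Planet (Const Mars))
       \<union> {(Rel A, map Old es) |A es. (A, es) \<in> facts D} \<union> {(SymV, [MarsE, Old a]) |a. a \<in> dom D}"
      using f by (simp add: marsify_def)
    then show ?thesis
  proof (elim UnE)
    assume "(A, es) \<in> eval_atom (pcint (cint D)) (\<lambda>_::unit. undefined) ` (Good Rs ar Cs \<union> Planet (Const Mars))"
    then show ?thesis by (rule good)
  next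
    assume "(A, es) \<in> {(Rel A, map Old es) |A es. (A, es) \<in> facts D}"
    then show ?thesis using fcD by (fastforce simp: Rs_plus_def dom_M)
  next
    assume "(A, es) \<in> {(SymV, [MarsE, Old a]) |a. a \<in> dom D}"
    then show ?thesis by (auto simp: Rs_plus_def dom_M)
  qed
  qed
  show ?thesis unfolding struct_over_def using 1 2 3 by blast
qed

theorem mainTheorem11:
  fixes Rs :: "'r set" and ar :: "'r \<Rightarrow> nat" and Cs :: "'c set"
    and \<Phi>s \<Phi>b :: "('r, 'v, 'c) ucq" and D :: "('r, 'c, 'e) rstruct"
  assumes "finite Rs" and "finite Cs"
    and "ucq_over Rs ar Cs \<Phi>s" and "pleasant_ucq \<Phi>s"
    and "ucq_over Rs ar Cs \<Phi>b" and "pleasant_ucq \<Phi>b"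
    and "struct_over Rs ar Cs D"
    and "ucount \<Phi>s D > ucount \<Phi>b D"
  shows "hcount (cqOf \<Phi>s) (marsify Rs ar Cs D) > hcount (cqOf \<Phi>b) (marsify Rs ar Cs D)
       \<and> \<not> le_forall TYPE('e pelem) Rs ar Cs (cqOf \<Phi>s) (cqOf \<Phi>b)"
proof -
  have gt: "hcount (cqOf \<Phi>s) (marsify Rs ar Cs D) > hcount (cqOf \<Phi>b) (marsify Rs ar Cs D)"
    using count[OF assms(3,4,7)] count[OF assms(5,6,7)] assms(8) by simp
  moreover have "\<not> le_forall TYPE('e pelem) Rs ar Cs (cqOf \<Phi>s) (cqOf \<Phi>b)"
    unfolding le_forall_def using mars_struct[OF assms(7)] gt by (auto simp: not_le)
  ultimately show ?thesis by blast
qed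

end
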